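(* Let $n$ be a natural number and $s$ a negative integer with $n+s>0$, and let $\Delta$ be a divisible design graph with parameters $(V,K,\lambda_1,\lambda_2;m,n)$, where $m=\frac{(-s)(n-1)}{n+s}$, $V=\frac{n(-s)(n-1)}{n+s}$, $K=(-s)(n-1)$, $\lambda_1=(-s)(n+s-1)$, $\lambda_2=\frac{(-s)(n-1)(n+s)}{n}$. Let $P_1,\dots,P_m$ be its canonical classes. Then for all $i,j\in\{1,\dots,m\}$ (including $i=j$), every vertex of $P_i$ has exactly $n+s$ neighbours in $P_j$; i.e., the quotient matrix of the canonical partition is $(n+s)J$, where $J$ is the $m\times m$ all-ones matrix.
   Context: A $K$-regular graph on $V$ vertices, neither complete nor edgeless, is a divisible design graph with parameters $(V,K,\lambda_1,\lambda_2;m,n)$ if its vertex set can be partitioned into $m$ classes (canonical classes) of size $n$ such that any two distinct vertices in the same class have exactly $\lambda_1$ common neighbours and any two vertices in different classes have exactly $\lambda_2$ common neighbours. The quotient matrix of the canonical partition is the $m\times m$ matrix $R=(r_{ij})$ where $r_{ij}$ is the number of neighbours in $P_j$ of a vertex of $P_i$ (this number is known to be independent of the chosen vertex of $P_i$). *)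

theory Defs
  imports Complex_Main "HOL-Library.Disjoint_Sets"
begin

definition nbhd :: "'a set \<Rightarrow> ('a \<Rightarrow> 'a \<Rightarrow> bool) \<Rightarrow> 'a \<Rightarrow> 'a set" where
  "nbhd Vs E v = {u \<in> Vs. E v u}"

definition simple_graph :: "'a set \<Rightarrow> ('a \<Rightarrow> 'a \<Rightarrow> bool) \<Rightarrow> bool" where
  "simple_graph Vs E \<longleftrightarrow> finite Vs \<and> (\<forall>u v. E u v \<longrightarrow> u \<in> Vs \<and> v \<in> Vs)
     \<and> (\<forall>u v. E u v \<longleftrightarrow> E v u) \<and> (\<forall>v. \<not> E v v)"

definition ddg :: "'a set \<Rightarrow> ('a \<Rightarrow> 'a \<Rightarrow> bool) \<Rightarrow> 'a set set \<Rightarrow>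
    nat \<Rightarrow> nat \<Rightarrow> nat \<Rightarrow> nat \<Rightarrow> nat \<Rightarrow> nat \<Rightarrow> bool" where
  "ddg Vs E P V K l1 l2 m n \<longleftrightarrow>
     simple_graph Vs E \<and> card Vs = V
     \<and> (\<forall>v\<in>Vs. card (nbhd Vs E v) = K)
     \<and> \<not> (\<forall>u\<in>Vs. \<forall>v\<in>Vs. u \<noteq> v \<longrightarrow> E u v)
     \<and> \<not> (\<forall>u v. \<not> E u v)
     \<and> partition_on Vs P \<and> card P = m \<and> (\<forall>X\<in>P. card X = n)
     \<and> (\<forall>X\<in>P. \<forall>u\<in>X. \<forall>v\<in>X. u \<noteq> v \<longrightarrow> card (nbhd Vs E u \<inter> nbhd Vs E v) = l1)
     \<and> (\<forall>X\<in>P. \<forall>Y\<in>P. X \<noteq> Y \<longrightarrow> (\<forall>u\<in>X. \<forall>v\<in>Y. card (nbhd Vs E u \<inter> nbhd Vs E v) = l2))"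

end

theory Submission
  imports Defs
begin

lemma card_filter_sum: "finite A \<Longrightarrow> card {x\<in>A. Q x} = (\<Sum>x\<in>A. if Q x then 1 else (0::nat))"
  by (simp add: sum.If_cases Int_def conj_commute)

theorem lemma4p1:
  fixes Vs :: "'a set" and E :: "'a \<Rightarrow> 'a \<Rightarrow> bool" and P :: "'a set set"
    and n :: nat and s :: int and V K l1 l2 m :: nat
  assumes "s < 0" and "int n + s > 0"
    and "real m = real_of_int ((- s) * (int n - 1)) / real_of_int (int n + s)"
    and "real V = real_of_int (int n * (- s) * (int n - 1)) / real_of_int (int n + s)"
    and "int K = (- s) * (int n - 1)"
    and "int l1 = (- s) * (int n + s - 1)"
    and "real l2 = real_of_int ((- s) * (int n - 1) * (int n + s)) / real n"
    and "ddg Vs E P V K l1 l2 m n"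
  shows "\<forall>Pi\<in>P. \<forall>Pj\<in>P. \<forall>v\<in>Pi. int (card (nbhd Vs E v \<inter> Pj)) = int n + s"
proof -
  let ?N = "nbhd Vs E"
  define k where "k = int n + s"
  from assms(8) have sg: "simple_graph Vs E" and deg: "\<forall>v\<in>Vs. card (?N v) = K"
    and part: "partition_on Vs P" and cP: "card P = m" and cX: "\<forall>X\<in>P. card X = n"
    and L1: "\<forall>X\<in>P. \<forall>u\<in>X. \<forall>v\<in>X. u \<noteq> v \<longrightarrow> card (?N u \<inter> ?N v) = l1"
    and L2: "\<forall>X\<in>P. \<forall>Y\<in>P. X \<noteq> Y \<longrightarrow> (\<forall>u\<in>X. \<forall>v\<in>Y. card (?N u \<inter> ?N v) = l2)"
    unfolding ddg_def by auto
  from sg have fin: "finite Vs" and Ein: "\<And>u v. E u v \<Longrightarrow> u \<in> Vs \<and> v \<in> Vs"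
    and Esym: "\<And>u v. E u v = E v u" unfolding simple_graph_def by auto
  have Nsub: "?N v \<subseteq> Vs" for v by (auto simp: nbhd_def)
  have finN: "finite (?N v)" for v using fin Nsub finite_subset by blast
  have PsubV: "X \<subseteq> Vs" if "X \<in> P" for X using part that unfolding partition_on_def by auto
  have finP: "finite P"
  proof -
    have "P \<subseteq> Pow Vs" using PsubV by auto
    then show ?thesis using fin finite_subset by blast
  qed
  have finX: "finite X" if "X \<in> P" for X using PsubV[OF that] fin finite_subset by blast
  have disj: "X \<inter> Y = {}" if "X \<in> P" "Y \<in> P" "X \<noteq> Y" for X Y
    using part that unfolding partition_on_def by (meson disjointD)
  have cover: "\<exists>X\<in>P. v \<in> X" if "v \<in> Vs" for v
    using part that unfolding partition_on_def by auto
  have n1: "n \<ge> 1" using assms(1,2) by linarith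
  have kpos: "k > 0" using assms(2) k_def by simp
  have hmk: "int m * k = (- s) * (int n - 1)"
  proof -
    have "real m * real_of_int k = real_of_int ((- s) * (int n - 1))"
      using assms(3) kpos k_def by (simp add: field_simps)
    then have "real_of_int (int m * k) = real_of_int ((- s) * (int n - 1))" by simp
    then show ?thesis by (simp only: of_int_eq_iff)
  qed
  have hK: "int K = int m * k" using hmk assms(5) by simp
  have hK2a: "int K + (int n - 1) * int l1 = (- s) * (int n - 1) * k"
    unfolding assms(5,6) k_def by (simp add: algebra_simps)
  have hK2: "int K + (int n - 1) * int l1 = int m * k * k"
    using hK2a hmk by simp
  have hl: "int l1 \<noteq> int l2"
  proof
    assume eq: "int l1 = int l2"
    have "real l2 * real n = real_of_int ((- s) * (int n - 1) * (int n + s))"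
      using assms(7) n1 by (simp add: field_simps)
    then have "real_of_int (int l2 * int n) = real_of_int ((- s) * (int n - 1) * (int n + s))" by simp
    then have "int l2 * int n = (- s) * (int n - 1) * (int n + s)" by (simp only: of_int_eq_iff)
    then have "(- s) * (int n + s - 1) * int n = (- s) * (int n - 1) * (int n + s)"
      using eq assms(6) by simp
    then have "(- s) * ((int n + s - 1) * int n - (int n - 1) * (int n + s)) = 0"
      by (simp add: algebra_simps)
    then have "(int n + s - 1) * int n - (int n - 1) * (int n + s) = 0" using assms(1) by simp
    then have "s = 0" by (simp add: algebra_simps)
    then show False using assms(1) by simp
  qed
  have dc: "(\<Sum>u\<in>?N v. card (?N u \<inter> B)) = (\<Sum>x\<in>B. card (?N v \<inter> ?N x))"
    if "B \<subseteq> Vs" for v B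
  proof -
    have finB: "finite B" using that fin finite_subset by blast
    have "(\<Sum>u\<in>?N v. card (?N u \<inter> B)) = (\<Sum>u\<in>?N v. \<Sum>x\<in>B. if E u x then 1 else 0)"
    proof (rule sum.cong[OF refl])
      fix u assume "u \<in> ?N v"
      have "?N u \<inter> B = {x\<in>B. E u x}" using that by (auto simp: nbhd_def)
      then show "card (?N u \<inter> B) = (\<Sum>x\<in>B. if E u x then 1 else 0)"
        using card_filter_sum[OF finB] by simp
    qed
    also have "\<dots> = (\<Sum>x\<in>B. \<Sum>u\<in>?N v. if E u x then 1 else 0)" by (rule sum.swap)
    also have "\<dots> = (\<Sum>x\<in>B. card (?N v \<inter> ?N x))"
    proof (rule sum.cong[OF refl])
      fix x assume "x \<in> B"
      have "?N v \<inter> ?N x = {u\<in>?N v. E u x}" by (auto simp: nbhd_def Esym)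
      then show "(\<Sum>u\<in>?N v. if E u x then 1 else 0) = card (?N v \<inter> ?N x)"
        using card_filter_sum[OF finN] by simp
    qed
    finally show ?thesis .
  qed
  have dcsym: "(\<Sum>u\<in>?N v. card (?N u \<inter> ?N w)) = (\<Sum>u\<in>?N w. card (?N u \<inter> ?N v))" for v w
  proof -
    have "(\<Sum>u\<in>?N v. card (?N u \<inter> ?N w)) = (\<Sum>x\<in>?N w. card (?N v \<inter> ?N x))"
      using dc Nsub by blast
    also have "\<dots> = (\<Sum>x\<in>?N w. card (?N x \<inter> ?N v))" by (simp add: Int_commute)
    finally show ?thesis .
  qed
  have lB: "int (\<Sum>u\<in>?N v. card (?N u \<inter> ?N w)) =
      int K * (if E v w then 1 else 0) + int l1 * (int (card (?N v \<inter> Y)) - (if E v w then 1 else 0))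
      + int l2 * (int K - int (card (?N v \<inter> Y)))"
    if v: "v \<in> Vs" and w: "w \<in> Y" and Y: "Y \<in> P" for v w Y
  proof -
    let ?g = "\<lambda>u. card (?N u \<inter> ?N w)"
    have split: "sum ?g (?N v) = sum ?g (?N v \<inter> Y) + sum ?g (?N v - Y)"
      using finN by (metis sum.Int_Diff)
    have d: "sum ?g (?N v - Y) = l2 * card (?N v - Y)"
    proof -
      have "sum ?g (?N v - Y) = sum (\<lambda>_. l2) (?N v - Y)"
      proof (rule sum.cong[OF refl])
        fix u assume u: "u \<in> ?N v - Y"
        then have "u \<in> Vs" using Nsub by auto
        then obtain Z where Z: "Z \<in> P" "u \<in> Z" using cover by blast
        then have "Z \<noteq> Y" using u by auto
        then show "?g u = l2" using L2 Z Y w by blast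
      qed
      then show ?thesis by simp
    qed
    have cK: "card (?N v \<inter> Y) + card (?N v - Y) = K"
      using card_Un_disjoint[of "?N v \<inter> Y" "?N v - Y"] finN deg v
      by (metis Int_Diff_Un Int_Diff_disjoint finite_Diff finite_Int)
    have i: "int (sum ?g (?N v \<inter> Y)) = int K * (if E v w then 1 else 0)
             + int l1 * (int (card (?N v \<inter> Y)) - (if E v w then 1 else 0))"
    proof (cases "E v w")
      case True
      then have wi: "w \<in> ?N v \<inter> Y" using w Ein by (auto simp: nbhd_def)
      have "sum ?g (?N v \<inter> Y) = ?g w + sum ?g (?N v \<inter> Y - {w})"
        using finN wi by (meson finite_Int sum.remove)
      also have "sum ?g (?N v \<inter> Y - {w}) = sum (\<lambda>_. l1) (?N v \<inter> Y - {w})"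
        using L1 Y w by (intro sum.cong) auto
      also have "?g w = K" using deg Ein True by simp
      finally have "sum ?g (?N v \<inter> Y) = K + l1 * card (?N v \<inter> Y - {w})" by simp
      moreover have "card (?N v \<inter> Y - {w}) + 1 = card (?N v \<inter> Y)"
        using wi finN by (metis card_Suc_Diff1 finite_Int Suc_eq_plus1)
      ultimately have "int (sum ?g (?N v \<inter> Y)) = int K + int l1 * int (card (?N v \<inter> Y - {w}))"
        and "int (card (?N v \<inter> Y)) = int (card (?N v \<inter> Y - {w})) + 1" by simp_all
      then show ?thesis using True by (simp add: algebra_simps)
    next
      case False
      then have "w \<notin> ?N v" by (auto simp: nbhd_def)
      have "sum ?g (?N v \<inter> Y) = sum (\<lambda>_. l1) (?N v \<inter> Y)"
      proof (rule sum.cong[OF refl])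
        fix x assume x: "x \<in> ?N v \<inter> Y"
        then have "x \<noteq> w" using \<open>w \<notin> ?N v\<close> by auto
        then show "?g x = l1" using L1 Y w x by blast
      qed
      then show ?thesis using False by simp
    qed
    have cK': "int (card (?N v - Y)) = int K - int (card (?N v \<inter> Y))" using cK by linarith
    have "int (sum ?g (?N v)) = int (sum ?g (?N v \<inter> Y)) + int l2 * int (card (?N v - Y))"
      using split d by simp
    then show ?thesis using i cK' by simp
  qed
  have comm: "card (?N v \<inter> Y) = card (?N w \<inter> X)"
    if "X \<in> P" "Y \<in> P" "v \<in> X" "w \<in> Y" for v w X Y
  proof -
    have vV: "v \<in> Vs" and wV: "w \<in> Vs" using that PsubV by auto
    note e1 = lB[OF vV that(4) that(2)]
    note e2 = lB[OF wV that(3) that(1)]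
    have "(int l1 - int l2) * (int (card (?N v \<inter> Y)) - int (card (?N w \<inter> X))) = 0"
      using e1 e2 dcsym[of v w] Esym[of v w] by (simp add: algebra_simps)
    then show ?thesis using hl by simp
  qed
  show ?thesis
  proof (intro ballI)
    fix X Y v assume X: "X \<in> P" and Y: "Y \<in> P" and v: "v \<in> X"
    have vV: "v \<in> Vs" using X v PsubV by auto
    let ?x = "\<lambda>Z. int (card (?N v \<inter> Z))"
    have S1: "(\<Sum>u\<in>?N v. card (?N u \<inter> X)) = K + (n - 1) * l1"
    proof -
      have "(\<Sum>u\<in>?N v. card (?N u \<inter> X)) = (\<Sum>x\<in>X. card (?N v \<inter> ?N x))"
        using dc PsubV X by blast
      also have "\<dots> = card (?N v \<inter> ?N v) + (\<Sum>x\<in>X - {v}. card (?N v \<inter> ?N x))"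
        using finX[OF X] v by (meson sum.remove)
      also have "(\<Sum>x\<in>X - {v}. card (?N v \<inter> ?N x)) = (\<Sum>x\<in>X - {v}. l1)"
        using L1 X v by (intro sum.cong) auto
      finally have "(\<Sum>u\<in>?N v. card (?N u \<inter> X)) = card (?N v) + l1 * card (X - {v})" by simp
      moreover have "card (X - {v}) = n - 1" using cX X v finX[OF X] by simp
      ultimately show ?thesis using deg vV by simp
    qed
    have Nun: "?N v = (\<Union>Z\<in>P. ?N v \<inter> Z)" using Nsub cover by blast
    have S2: "(\<Sum>u\<in>?N v. card (?N u \<inter> X)) = (\<Sum>Z\<in>P. card (?N v \<inter> Z) * card (?N v \<inter> Z))"
    proof -
      have "(\<Sum>u\<in>?N v. card (?N u \<inter> X)) = (\<Sum>Z\<in>P. \<Sum>u\<in>?N v \<inter> Z. card (?N u \<inter> X))"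
        apply (subst Nun)
        apply (rule sum.UNION_disjoint)
        using finP finN disj by auto
      also have "\<dots> = (\<Sum>Z\<in>P. \<Sum>u\<in>?N v \<inter> Z. card (?N v \<inter> Z))"
      proof (rule sum.cong[OF refl], rule sum.cong[OF refl])
        fix Z u assume Z: "Z \<in> P" and u: "u \<in> ?N v \<inter> Z"
        then show "card (?N u \<inter> X) = card (?N v \<inter> Z)" using comm[OF X Z v, of u] by simp
      qed
      finally show ?thesis by simp
    qed
    have S3: "(\<Sum>Z\<in>P. card (?N v \<inter> Z)) = K"
    proof -
      have "card (?N v) = (\<Sum>Z\<in>P. card (?N v \<inter> Z))"
        apply (subst Nun)
        apply (rule card_UN_disjoint)
        using finP finN disj by auto
      then show ?thesis using deg vV by simp
    qed
    have sq: "(\<Sum>Z\<in>P. ?x Z * ?x Z) = int m * k * k"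
    proof -
      have "(\<Sum>Z\<in>P. ?x Z * ?x Z) = int (\<Sum>Z\<in>P. card (?N v \<inter> Z) * card (?N v \<inter> Z))"
        by simp
      also have "\<dots> = int K + (int n - 1) * int l1" using S1 S2 n1 by (simp add: of_nat_diff)
      finally show ?thesis using hK2 by simp
    qed
    have li: "(\<Sum>Z\<in>P. ?x Z) = int m * k"
    proof -
      have "(\<Sum>Z\<in>P. ?x Z) = int (\<Sum>Z\<in>P. card (?N v \<inter> Z))" by simp
      then show ?thesis using S3 hK by simp
    qed
    have "(\<Sum>Z\<in>P. (?x Z - k)^2) = (\<Sum>Z\<in>P. ?x Z * ?x Z) - 2 * k * (\<Sum>Z\<in>P. ?x Z) + int (card P) * k * k"
      by (simp add: power2_eq_square algebra_simps sum.distrib sum_subtractf sum_distrib_left)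
    also have "\<dots> = 0" using sq li cP by (simp add: algebra_simps)
    finally have "(\<Sum>Z\<in>P. (?x Z - k)^2) = 0" .
    then have "\<forall>Z\<in>P. (?x Z - k)^2 = 0"
      using sum_nonneg_eq_0_iff[OF finP, of "\<lambda>Z. (?x Z - k)^2"] by simp
    then show "int (card (?N v \<inter> Y)) = int n + s" using Y k_def by simp
  qed
qed

end
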